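(* Let $V_1,V_2:\mathbb{R}\to\mathbb{R}$ satisfy the assumptions (C1), (C2) below, let $k(x,y)=e^{-V_1(y)-V_2(y-x)}$, let $\lambda>0$ be the spectral radius of the integral operator $(\mathcal{K}f)(x)=\int_\mathbb{R} k(x,y)f(y)\,dy$ on $L^2(\mathbb{R})$, and let $v$ be a positive right eigenfunction, $v(x)=\lambda^{-1}\int_\mathbb{R} k(x,y)v(y)\,dy$ for all $x$. Let $p(x,y)=\frac{k(x,y)v(y)}{\lambda v(x)}$. For $a,b\in\mathbb{R}$, under a probability $\mathbf{P}^{(a,b)}$ let $(Y_n)_{n\ge0}$ be a Markov chain on $\mathbb{R}$ with $Y_0=a$ and transition kernel $p(x,y)\,dy$, and let $W_0=b$, $W_n=b+Y_1+\dots+Y_n$. Then for every $n\in\mathbb{N}$, setting $w_{-1}:=b-a$ and $w_0:=b$, $$\mathbf{P}^{(a,b)}\big((W_1,\dots,W_n)\in(dw_1,\dots,dw_n)\big)=\frac{v(w_n-w_{n-1})}{\lambda^n v(a)}\,e^{-\mathcal{H}_{[-1,n]}(w_{-1},\dots,w_n)}\prod_{i=1}^n dw_i,$$ where $\mathcal{H}_{[-1,n]}(w_{-1},\dots,w_n)=\sum_{i=1}^{n}V_1(w_i-w_{i-1})+\sum_{i=0}^{n-1}V_2(w_{i+1}+w_{i-1}-2w_i)$.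
   Context: Assumptions: (C1) $V_1$ measurable, bounded from below, symmetric, $\lim_{|x|\to\infty}V_1(x)=+\infty$, $\int e^{-2V_1}<\infty$; (C2) $V_2$ measurable, bounded from below, bounded above on $[-\gamma,\gamma]$ for some $\gamma>0$, $\int|x|e^{-V_2(x)}dx<\infty$. Under these assumptions $\mathcal{K}$ is Hilbert–Schmidt, its spectral radius $\lambda>0$ is an isolated eigenvalue with an eigenfunction $v\in L^2(\mathbb{R})$, $v>0$ everywhere (defined pointwise by the eigen-equation), so $p(x,\cdot)$ is a probability density for each $x$. *)

theory Defs
  imports "HOL-Probability.Probability"
begin

definition cond_C1 :: "(real \<Rightarrow> real) \<Rightarrow> bool" where
  "cond_C1 V1 \<longleftrightarrow>
     V1 \<in> borel_measurable borel \<and>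
     (\<exists>c. \<forall>x. c \<le> V1 x) \<and>
     (\<forall>x. V1 (- x) = V1 x) \<and>
     filterlim V1 at_top at_infinity \<and>
     integrable lborel (\<lambda>x. exp (- 2 * V1 x))"

definition cond_C2 :: "(real \<Rightarrow> real) \<Rightarrow> bool" where
  "cond_C2 V2 \<longleftrightarrow>
     V2 \<in> borel_measurable borel \<and>
     (\<exists>c. \<forall>x. c \<le> V2 x) \<and>
     (\<exists>\<gamma>>0. \<exists>C. \<forall>x\<in>{-\<gamma>..\<gamma>}. V2 x \<le> C) \<and>
     integrable lborel (\<lambda>x. \<bar>x\<bar> * exp (- V2 x))"

definition kern :: "(real \<Rightarrow> real) \<Rightarrow> (real \<Rightarrow> real) \<Rightarrow> real \<Rightarrow> real \<Rightarrow> real" where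
  "kern V1 V2 x y = exp (- V1 y - V2 (y - x))"

definition sq_int :: "(real \<Rightarrow> complex) \<Rightarrow> bool" where
  "sq_int f \<longleftrightarrow> f \<in> borel_measurable lborel \<and> integrable lborel (\<lambda>x. (cmod (f x))\<^sup>2)"

definition int_op :: "(real \<Rightarrow> real \<Rightarrow> real) \<Rightarrow> (real \<Rightarrow> complex) \<Rightarrow> real \<Rightarrow> complex" where
  "int_op k f x = (LINT y|lborel. complex_of_real (k x y) * f y)"

text \<open>Spectrum of the integral operator with kernel k on (complex) L2(R):
  the mu for which K - mu I is not bijective on L2 (functions identified a.e.).\<close>
definition L2_spectrum :: "(real \<Rightarrow> real \<Rightarrow> real) \<Rightarrow> complex set" where
  "L2_spectrum k = {\<mu>. \<not> (
      (\<forall>g. sq_int g \<longrightarrow> (\<exists>f. sq_int f \<and> (AE x in lborel. int_op k f x - \<mu> * f x = g x))) \<and>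
      (\<forall>f. sq_int f \<longrightarrow> (AE x in lborel. int_op k f x - \<mu> * f x = 0) \<longrightarrow> (AE x in lborel. f x = 0)))}"

definition L2_spectral_radius :: "(real \<Rightarrow> real \<Rightarrow> real) \<Rightarrow> real" where
  "L2_spectral_radius k = Sup (cmod ` L2_spectrum k)"

definition trans_dens :: "(real \<Rightarrow> real \<Rightarrow> real) \<Rightarrow> real \<Rightarrow> (real \<Rightarrow> real) \<Rightarrow> real \<Rightarrow> real \<Rightarrow> real" where
  "trans_dens k lam v x y = k x y * v y / (lam * v x)"

text \<open>Y is (under the probability M) a Markov chain on R started at a with transition
  kernel p(x,y) dy: Y 0 = a a.s., and for every n,
  P((Y_0..Y_n) in A, Y_{n+1} in B) = E[1_A(Y_0..Y_n) int_B p(Y_n,y) dy].\<close>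
definition markov_chain_dens :: "'s measure \<Rightarrow> (nat \<Rightarrow> 's \<Rightarrow> real) \<Rightarrow> real \<Rightarrow> (real \<Rightarrow> real \<Rightarrow> real) \<Rightarrow> bool" where
  "markov_chain_dens M Y a p \<longleftrightarrow>
     prob_space M \<and>
     (\<forall>n. Y n \<in> borel_measurable M) \<and>
     (AE \<omega> in M. Y 0 \<omega> = a) \<and>
     (\<forall>n A B. A \<in> sets (PiM {0..n} (\<lambda>_. lborel)) \<longrightarrow> B \<in> sets lborel \<longrightarrow>
        emeasure M {\<omega> \<in> space M. (\<lambda>i\<in>{0..n}. Y i \<omega>) \<in> A \<and> Y (Suc n) \<omega> \<in> B}
        = (\<integral>\<^sup>+ \<omega>. indicator A (\<lambda>i\<in>{0..n}. Y i \<omega>) *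
              (\<integral>\<^sup>+ y. indicator B y * ennreal (p (Y n \<omega>) y) \<partial>lborel) \<partial>M))"

definition ext_conf :: "real \<Rightarrow> real \<Rightarrow> (nat \<Rightarrow> real) \<Rightarrow> int \<Rightarrow> real" where
  "ext_conf a b w i = (if i = -1 then b - a else if i = 0 then b else w (nat i))"

definition hamil :: "(real \<Rightarrow> real) \<Rightarrow> (real \<Rightarrow> real) \<Rightarrow> nat \<Rightarrow> (int \<Rightarrow> real) \<Rightarrow> real" where
  "hamil V1 V2 n w =
     (\<Sum>i=1..int n. V1 (w i - w (i - 1))) +
     (\<Sum>i=0..int n - 1. V2 (w (i + 1) + w (i - 1) - 2 * w i))"

end

theory Submission imports Defs begin

lemma ext_conf_upd_le:
  assumes "i \<le> int N"
  shows "ext_conf a b (w(Suc N := u)) i = ext_conf a b w i"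
  using assms by (auto simp: ext_conf_def)

lemma ext_conf_upd_top:
  "ext_conf a b (w(Suc N := u)) (int N + 1) = u"
  by (auto simp: ext_conf_def nat_int_add)

lemma hamil_step:
  "hamil V1 V2 (Suc N) (ext_conf a b (w(Suc N := u))) =
   hamil V1 V2 N (ext_conf a b w) + V1 (u - ext_conf a b w (int N))
     + V2 (u + ext_conf a b w (int N - 1) - 2 * ext_conf a b w (int N))"
proof -
  let ?e' = "ext_conf a b (w(Suc N := u))" and ?e = "ext_conf a b w"
  have s1: "{1..int (Suc N)} = insert (int N + 1) {1..int N}" by auto
  have s2: "{0..int (Suc N) - 1} = insert (int N) {0..int N - 1}" by auto
  have A: "(\<Sum>i=1..int (Suc N). V1 (?e' i - ?e' (i - 1))) =
     V1 (u - ?e (int N)) + (\<Sum>i=1..int N. V1 (?e i - ?e (i - 1)))"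
    unfolding s1 by (simp add: ext_conf_upd_le ext_conf_upd_top)
  have B: "(\<Sum>i=0..int (Suc N) - 1. V2 (?e' (i + 1) + ?e' (i - 1) - 2 * ?e' i)) =
     V2 (u + ?e (int N - 1) - 2 * ?e (int N)) + (\<Sum>i=0..int N - 1. V2 (?e (i + 1) + ?e (i - 1) - 2 * ?e i))"
    unfolding s2 by (simp add: ext_conf_upd_le ext_conf_upd_top)
  show ?thesis unfolding hamil_def A B by simp
qed

lemma comp_meas[measurable]:
  "(\<lambda>w::nat\<Rightarrow>real. w j) \<in> borel_measurable (PiM I (\<lambda>_. lborel::real measure))"
proof (cases "j \<in> I")
  case True then show ?thesis by measurable
next
  case False
  have "(\<lambda>w::nat\<Rightarrow>real. undefined::real) \<in> borel_measurable (PiM I (\<lambda>_. lborel::real measure))" by simp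
  then show ?thesis
    by (rule measurable_cong[THEN iffD1, rotated]) (use False in \<open>auto simp: space_PiM PiE_def extensional_def\<close>)
qed

lemma ext_conf_meas[measurable]:
  "(\<lambda>w. ext_conf a b w i) \<in> borel_measurable (PiM I (\<lambda>_. lborel::real measure))"
  unfolding ext_conf_def by measurable

lemma hamil_meas[measurable]:
  assumes [measurable]: "V1 \<in> borel_measurable borel" "V2 \<in> borel_measurable borel"
  shows "(\<lambda>w. hamil V1 V2 n (ext_conf a b w)) \<in> borel_measurable (PiM I (\<lambda>_. lborel::real measure))"
  unfolding hamil_def by measurable

locale mcs =
  fixes V1 V2 :: "real \<Rightarrow> real" and lam :: real and v :: "real \<Rightarrow> real"
    and M :: "'s measure" and Y :: "nat \<Rightarrow> 's \<Rightarrow> real" and a b :: real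
  assumes V1m[measurable]: "V1 \<in> borel_measurable borel"
    and V2m[measurable]: "V2 \<in> borel_measurable borel"
    and vm[measurable]: "v \<in> borel_measurable borel"
    and lam_pos: "lam > 0" and v_pos: "\<And>x. v x > 0"
    and MC: "markov_chain_dens M Y a (trans_dens (kern V1 V2) lam v)"
begin

definition "p = trans_dens (kern V1 V2) lam v"
definition "gd N w = ennreal (v (ext_conf a b w (int N) - ext_conf a b w (int N - 1)) / (lam ^ N * v a)
                   * exp (- hamil V1 V2 N (ext_conf a b w)))"
definition "dd N w = ext_conf a b w (int N) - ext_conf a b w (int N - 1)"

lemma p_meas[measurable]: "(\<lambda>(x,y). p x y) \<in> borel_measurable (borel \<Otimes>\<^sub>M borel)"
  unfolding p_def trans_dens_def kern_def by measurable

lemma gd_meas[measurable]: "gd N \<in> borel_measurable (PiM I (\<lambda>_. lborel))"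
  unfolding gd_def by measurable

lemma gd_step:
  "gd N w * ennreal (p (dd N w) (u - ext_conf a b w (int N))) = gd (Suc N) (w(Suc N := u))"
proof -
  let ?e = "ext_conf a b w"
  have e1: "ext_conf a b (w(Suc N := u)) (int (Suc N)) = u"
    using ext_conf_upd_top[of a b w N u] by (simp add: add.commute)
  have e2: "ext_conf a b (w(Suc N := u)) (int (Suc N) - 1) = ?e (int N)"
    by (simp add: ext_conf_upd_le)
  have vd: "v (dd N w) > 0" "v a > 0" "v (u - ?e (int N)) > 0" using v_pos by auto
  have "gd N w * ennreal (p (dd N w) (u - ?e (int N))) =
     ennreal (v (dd N w) / (lam ^ N * v a) * exp (- hamil V1 V2 N ?e) *
       (exp (- V1 (u - ?e (int N)) - V2 (u - ?e (int N) - dd N w)) * v (u - ?e (int N)) / (lam * v (dd N w))))"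
    unfolding gd_def p_def trans_dens_def kern_def dd_def
    by (subst ennreal_mult[symmetric]) (use vd lam_pos in \<open>auto simp: dd_def intro!: mult_nonneg_nonneg divide_nonneg_nonneg\<close>)
  also have "\<dots> = gd (Suc N) (w(Suc N := u))"
    unfolding gd_def e1 e2 hamil_step
    using vd lam_pos
    by (simp add: dd_def exp_diff exp_add field_simps exp_minus_inverse)
  finally show ?thesis .
qed


lemma prob: "prob_space M" using MC unfolding markov_chain_dens_def by auto
lemma Ym[measurable]: "Y n \<in> borel_measurable M" using MC unfolding markov_chain_dens_def by auto
lemma Y0: "AE \<omega> in M. Y 0 \<omega> = a" using MC unfolding markov_chain_dens_def by auto
lemma rect:
  "A \<in> sets (PiM {0..n} (\<lambda>_. lborel)) \<Longrightarrow> B \<in> sets lborel \<Longrightarrow>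
        emeasure M {\<omega> \<in> space M. (\<lambda>i\<in>{0..n}. Y i \<omega>) \<in> A \<and> Y (Suc n) \<omega> \<in> B}
        = (\<integral>\<^sup>+ \<omega>. indicator A (\<lambda>i\<in>{0..n}. Y i \<omega>) *
              (\<integral>\<^sup>+ y. indicator B y * ennreal (p (Y n \<omega>) y) \<partial>lborel) \<partial>M)"
  using MC unfolding markov_chain_dens_def p_def by auto

definition "Z N \<omega> = (\<lambda>i\<in>{0..N}. Y i \<omega>)"
definition "W N \<omega> = (\<lambda>i\<in>{1..N}. b + (\<Sum>j=1..i. Y j \<omega>))"

lemma Z_meas[measurable]: "Z N \<in> M \<rightarrow>\<^sub>M PiM {0..N} (\<lambda>_. lborel)"
  unfolding Z_def by measurable

lemma W_meas[measurable]: "W N \<in> M \<rightarrow>\<^sub>M PiM {1..N} (\<lambda>_. lborel)"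
  unfolding W_def by measurable

lemma L12: "distr M (PiM {0..N} (\<lambda>_. lborel) \<Otimes>\<^sub>M lborel) (\<lambda>\<omega>. (Z N \<omega>, Y (Suc N) \<omega>))
  = density (distr M (PiM {0..N} (\<lambda>_. lborel)) (Z N) \<Otimes>\<^sub>M lborel) (\<lambda>(z,y). ennreal (p (z N) y))"
  (is "?L1 = ?L2")
proof -
  let ?P = "PiM {0..N} (\<lambda>_. lborel::real measure)"
  let ?Q = "distr M ?P (Z N)"
  let ?E = "{A \<times> B | A B. A \<in> sets ?P \<and> B \<in> sets (lborel::real measure)}"
  let ?\<Omega> = "space ?P \<times> space (lborel::real measure)"
  interpret prob_space M by (rule prob)
  interpret L1: prob_space ?L1 by (rule prob_space_distr) measurable
  interpret lb: sigma_finite_measure "lborel::real measure" by (rule sigma_finite_lborel)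
  have pm[measurable]: "(\<lambda>(z,y). ennreal (p (z N) y)) \<in> borel_measurable (?Q \<Otimes>\<^sub>M lborel)"
    by measurable
  show ?thesis
  proof (rule measure_eqI_generator_eq[where E="?E" and \<Omega>="?\<Omega>" and A="\<lambda>_. ?\<Omega>"])
    show "Int_stable ?E" by (rule Int_stable_pair_measure_generator)
    show "?E \<subseteq> Pow ?\<Omega>" by (rule pair_measure_closed)
    show "sets ?L1 = sigma_sets ?\<Omega> ?E" by (simp add: sets_pair_measure)
    show "sets ?L2 = sigma_sets ?\<Omega> ?E" by (simp add: sets_pair_measure)
    show "range (\<lambda>_. ?\<Omega>) \<subseteq> ?E"
      using sets.top[of ?P] sets.top[of "lborel::real measure"] by blast
    show "(\<Union>i. ?\<Omega>) = ?\<Omega>" by simp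
    show "emeasure ?L1 ?\<Omega> \<noteq> \<infinity>" for i::nat by simp
    fix X assume "X \<in> ?E"
    then obtain A B where X: "X = A \<times> B" and A[measurable]: "A \<in> sets ?P" and B[measurable]: "B \<in> sets (lborel::real measure)" by auto
    have "emeasure ?L1 X = emeasure M {\<omega> \<in> space M. Z N \<omega> \<in> A \<and> Y (Suc N) \<omega> \<in> B}"
      unfolding X using A B by (subst emeasure_distr) (auto intro!: arg_cong2[where f=emeasure] pair_measureI)
    also have "\<dots> = (\<integral>\<^sup>+ \<omega>. indicator A (Z N \<omega>) *
              (\<integral>\<^sup>+ y. indicator B y * ennreal (p (Y N \<omega>) y) \<partial>lborel) \<partial>M)"
      unfolding Z_def using rect[OF A B] by simp
    also have "\<dots> = (\<integral>\<^sup>+ z. indicator A z *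
              (\<integral>\<^sup>+ y. indicator B y * ennreal (p (z N) y) \<partial>lborel) \<partial>?Q)"
      by (subst nn_integral_distr) (auto simp: Z_def)
    also have "\<dots> = (\<integral>\<^sup>+ z. (\<integral>\<^sup>+ y. ennreal (p (z N) y) * indicator X (z, y) \<partial>lborel) \<partial>?Q)"
      by (auto simp: X nn_integral_cmult[symmetric] intro!: nn_integral_cong split: split_indicator)
    also have "\<dots> = (\<integral>\<^sup>+ x. (case x of (z,y) \<Rightarrow> ennreal (p (z N) y)) * indicator X x \<partial>(?Q \<Otimes>\<^sub>M lborel))"
      by (subst sigma_finite_measure.nn_integral_fst[OF sigma_finite_lborel, symmetric]) (auto simp: X)
    also have "\<dots> = emeasure ?L2 X"
      using A B by (subst emeasure_density) (auto simp: X intro!: pair_measureI)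
    finally show "emeasure ?L1 X = emeasure ?L2 X" .
  qed
qed


definition "Fm N x = (\<lambda>i\<in>{1..Suc N}. b + (\<Sum>j=1..i. if j = Suc N then snd x else fst x j))"
definition "wp N w y = (\<lambda>i\<in>{1..Suc N}. if i = Suc N then ext_conf a b w (int N) + y else (w i::real))"

lemma Fm_meas[measurable]: "Fm N \<in> (PiM {0..N} (\<lambda>_. lborel) \<Otimes>\<^sub>M lborel) \<rightarrow>\<^sub>M PiM {1..Suc N} (\<lambda>_. lborel)"
  unfolding Fm_def by measurable

lemma wp_meas[measurable]: "(\<lambda>x. wp N (fst x) (snd x)) \<in> (PiM {1..N} (\<lambda>_. lborel) \<Otimes>\<^sub>M lborel) \<rightarrow>\<^sub>M PiM {1..Suc N} (\<lambda>_. lborel)"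
  unfolding wp_def
proof (rule measurable_restrict)
  fix i assume "i \<in> {1..Suc N}"
  have m1: "(\<lambda>x. ext_conf a b (fst x) (int N) + snd x) \<in> borel_measurable (PiM {1..N} (\<lambda>_. lborel) \<Otimes>\<^sub>M lborel)"
    using measurable_compose[OF measurable_fst ext_conf_meas] by measurable
  have m2: "(\<lambda>x. fst x i) \<in> borel_measurable (PiM {1..N} (\<lambda>_. lborel::real measure) \<Otimes>\<^sub>M (lborel::real measure))"
    using measurable_compose[OF measurable_fst comp_meas[of i "{1..N}"], of "lborel::real measure"] by (simp add: comp_def)
  show "(\<lambda>x. if i = Suc N then ext_conf a b (fst x) (int N) + snd x else fst x i) \<in> PiM {1..N} (\<lambda>_. lborel) \<Otimes>\<^sub>M lborel \<rightarrow>\<^sub>M lborel"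
    using m1 m2 by (cases "i = Suc N") simp_all
qed

lemma nat_1_int[simp]: "nat (1 + int n) = Suc n" by simp

lemma eN_W: "ext_conf a b (W N \<omega>) (int N) = b + (\<Sum>j=1..N. Y j \<omega>)"
  by (cases N) (auto simp: ext_conf_def W_def)

lemma dd_W: assumes "Y 0 \<omega> = a" shows "dd N (W N \<omega>) = Y N \<omega>"
proof (cases N)
  case 0 then show ?thesis using assms by (simp add: dd_def ext_conf_def)
next
  case (Suc m)
  have "ext_conf a b (W N \<omega>) (int N - 1) = b + (\<Sum>j=1..m. Y j \<omega>)"
    using Suc by (cases m) (auto simp: ext_conf_def W_def)
  then show ?thesis unfolding dd_def eN_W using Suc by simp
qed

lemma ZNN: "Z N \<omega> N = Y N \<omega>" by (simp add: Z_def)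

lemma Fm_W: "Fm N (Z N \<omega>, y) = wp N (W N \<omega>) y"
proof
  fix i show "Fm N (Z N \<omega>, y) i = wp N (W N \<omega>) y i"
  proof (cases "i \<in> {1..Suc N}")
    case False then show ?thesis by (auto simp: Fm_def wp_def)
  next
    case True
    show ?thesis
    proof (cases "i = Suc N")
      case True
      have "(\<Sum>j=1..Suc N. if j = Suc N then y else Z N \<omega> j) = (\<Sum>j=1..N. Y j \<omega>) + y"
        by (subst sum.cl_ivl_Suc) (auto simp: Z_def intro!: sum.cong)
      then show ?thesis using True by (simp add: Fm_def wp_def eN_W)
    next
      case False
      with \<open>i \<in> {1..Suc N}\<close> have "i \<in> {1..N}" by auto
      then show ?thesis using False
        by (auto simp: Fm_def wp_def W_def Z_def intro!: sum.cong)
    qed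
  qed
qed

lemma W_Suc: "W (Suc N) \<omega> = Fm N (Z N \<omega>, Y (Suc N) \<omega>)"
proof
  fix i show "W (Suc N) \<omega> i = Fm N (Z N \<omega>, Y (Suc N) \<omega>) i"
    by (auto simp: W_def Fm_def Z_def intro!: sum.cong)
qed


lemma main: "distr M (PiM {1..N} (\<lambda>_. lborel)) (W N) = density (PiM {1..N} (\<lambda>_. lborel)) (gd N)"
proof (induction N)
  case 0
  interpret prob_space M by (rule prob)
  have g0: "gd 0 = (\<lambda>_. 1)"
    using v_pos[of a] by (auto simp: gd_def ext_conf_def hamil_def fun_eq_iff)
  have W0: "W 0 \<omega> = (\<lambda>_. undefined)" for \<omega> by (auto simp: W_def)
  show ?case unfolding g0 density_1
  proof (rule measure_eqI)
    fix C assume "C \<in> sets (distr M (PiM {1..0} (\<lambda>_. lborel::real measure)) (W 0))"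
    then have C: "C \<subseteq> {\<lambda>_. undefined}" by (simp add: PiM_empty)
    show "emeasure (distr M (PiM {1..0} (\<lambda>_. lborel::real measure)) (W 0)) C = emeasure (PiM {1..0} (\<lambda>_. lborel::real measure)) C"
    proof (cases "C = {}")
      case True then show ?thesis by simp
    next
      case False
      with C have C': "C = {\<lambda>_. undefined}" by auto
      have "emeasure (distr M (PiM {1..0} (\<lambda>_. lborel::real measure)) (W 0)) C = emeasure M (space M)"
        using C' W_meas[of 0] by (subst emeasure_distr) (auto simp: PiM_empty W0 intro!: arg_cong2[where f=emeasure])
      then show ?thesis using C' by (simp add: PiM_empty emeasure_space_1)
    qed
  qed simp
next
  case (Suc N)
  interpret prob_space M by (rule prob)
  let ?PN = "PiM {1..N} (\<lambda>_. lborel::real measure)"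
  let ?PS = "PiM {1..Suc N} (\<lambda>_. lborel::real measure)"
  let ?P = "PiM {0..N} (\<lambda>_. lborel::real measure)"
  let ?Q = "distr M ?P (Z N)"
  let ?L1 = "distr M (?P \<Otimes>\<^sub>M lborel) (\<lambda>\<omega>. (Z N \<omega>, Y (Suc N) \<omega>))"
  let ?L2 = "density (?Q \<Otimes>\<^sub>M lborel) (\<lambda>(z,y). ennreal (p (z N) y))"
  let ?eN = "\<lambda>w. ext_conf a b w (int N)"
  let ?G = "\<lambda>C w. \<integral>\<^sup>+ y. ennreal (p (dd N w) y) * indicator C (wp N w y) \<partial>lborel"
  have dd_meas[measurable]: "dd N \<in> borel_measurable ?PN" unfolding dd_def by measurable
  show ?case
  proof (rule measure_eqI)
    fix C assume "C \<in> sets (distr M ?PS (W (Suc N)))"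
    then have C[measurable]: "C \<in> sets ?PS" by simp
    have G_meas: "?G C \<in> borel_measurable ?PN"
    proof -
      have "(\<lambda>x. ennreal (p (dd N (fst x)) (snd x)) * indicator C (wp N (fst x) (snd x))) \<in> borel_measurable (?PN \<Otimes>\<^sub>M lborel)"
      proof -
        have "(\<lambda>x. (dd N (fst x), snd x)) \<in> (?PN \<Otimes>\<^sub>M lborel) \<rightarrow>\<^sub>M (borel \<Otimes>\<^sub>M borel)" by measurable
        then have "(\<lambda>x. (\<lambda>(x,y). p x y) (dd N (fst x), snd x)) \<in> borel_measurable (?PN \<Otimes>\<^sub>M lborel)"
          by (rule measurable_compose) (rule p_meas)
        moreover have "(\<lambda>x. indicator C (wp N (fst x) (snd x)) :: ennreal) \<in> borel_measurable (?PN \<Otimes>\<^sub>M lborel)"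
          using measurable_compose[OF wp_meas borel_measurable_indicator[OF C]] by simp
        ultimately show ?thesis by simp
      qed
      from sigma_finite_measure.borel_measurable_nn_integral_fst[OF sigma_finite_lborel this]
      show ?thesis by simp
    qed
    have "emeasure (distr M ?PS (W (Suc N))) C = (\<integral>\<^sup>+x. indicator C x \<partial>distr M ?PS (W (Suc N)))"
      using C by (simp add: nn_integral_indicator)
    also have "\<dots> = (\<integral>\<^sup>+\<omega>. indicator C (W (Suc N) \<omega>) \<partial>M)"
      using W_meas[of "Suc N"] borel_measurable_indicator[OF C] by (subst nn_integral_distr) auto
    also have "\<dots> = (\<integral>\<^sup>+\<omega>. indicator C (Fm N (Z N \<omega>, Y (Suc N) \<omega>)) \<partial>M)"
      by (simp add: W_Suc)
    also have "\<dots> = (\<integral>\<^sup>+x. indicator C (Fm N x) \<partial>?L1)"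
      by (subst nn_integral_distr) auto
    also have "\<dots> = (\<integral>\<^sup>+x. indicator C (Fm N x) \<partial>?L2)"
      by (simp only: L12)
    also have "\<dots> = (\<integral>\<^sup>+x. (case x of (z,y) \<Rightarrow> ennreal (p (z N) y)) * indicator C (Fm N x) \<partial>(?Q \<Otimes>\<^sub>M lborel))"
      by (subst nn_integral_density) auto
    also have "\<dots> = (\<integral>\<^sup>+z. \<integral>\<^sup>+y. ennreal (p (z N) y) * indicator C (Fm N (z, y)) \<partial>lborel \<partial>?Q)"
      by (subst sigma_finite_measure.nn_integral_fst[OF sigma_finite_lborel, symmetric]) auto
    also have "\<dots> = (\<integral>\<^sup>+\<omega>. \<integral>\<^sup>+y. ennreal (p (Z N \<omega> N) y) * indicator C (Fm N (Z N \<omega>, y)) \<partial>lborel \<partial>M)"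
      by (subst nn_integral_distr) auto
    also have "\<dots> = (\<integral>\<^sup>+\<omega>. ?G C (W N \<omega>) \<partial>M)"
    proof (rule nn_integral_cong_AE)
      show "AE \<omega> in M. (\<integral>\<^sup>+y. ennreal (p (Z N \<omega> N) y) * indicator C (Fm N (Z N \<omega>, y)) \<partial>lborel) = ?G C (W N \<omega>)"
        using Y0 by eventually_elim (simp add: Fm_W dd_W ZNN)
    qed
    also have "\<dots> = (\<integral>\<^sup>+w. ?G C w \<partial>distr M ?PN (W N))"
      using G_meas W_meas[of N] by (subst nn_integral_distr) auto
    also have "\<dots> = (\<integral>\<^sup>+w. gd N w * ?G C w \<partial>?PN)"
      unfolding Suc.IH using G_meas by (subst nn_integral_density) auto
    also have "\<dots> = (\<integral>\<^sup>+w. \<integral>\<^sup>+u. gd (Suc N) (w(Suc N := u)) * indicator C (w(Suc N := u)) \<partial>lborel \<partial>?PN)"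
    proof (rule nn_integral_cong)
      fix w assume w: "w \<in> space ?PN"
      have wp: "wp N w x = w(Suc N := ?eN w + x)" for x
      proof
        fix i show "wp N w x i = (w(Suc N := ?eN w + x)) i"
          using w apply (cases "i = Suc N")
          apply (simp add: wp_def)
          apply (auto simp: wp_def space_PiM PiE_def extensional_def)
          done
      qed
      have m1: "(\<lambda>u. w(Suc N := u)) \<in> lborel \<rightarrow>\<^sub>M ?PS"
      proof -
        have "(\<lambda>u. w(Suc N := u)) = (\<lambda>u. (\<lambda>i\<in>{1..Suc N}. if i = Suc N then u else w i))"
          using w by (auto simp: space_PiM PiE_def extensional_def fun_eq_iff)
        also have "\<dots> \<in> lborel \<rightarrow>\<^sub>M ?PS"
        proof (rule measurable_restrict)
          fix i show "(\<lambda>u. if i = Suc N then u else w i) \<in> lborel \<rightarrow>\<^sub>M lborel" by (cases "i = Suc N") auto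
        qed
        finally show ?thesis .
      qed
      have m2: "(\<lambda>u. ennreal (p (dd N w) (u - ?eN w))) \<in> borel_measurable lborel"
      proof -
        have "(\<lambda>u. (d, u - c)) \<in> lborel \<rightarrow>\<^sub>M (borel \<Otimes>\<^sub>M borel)" for d c :: real
          by (intro measurable_Pair borel_measurable_diff measurable_const) auto
        from measurable_compose[OF this p_meas] show ?thesis by simp
      qed
      have m3: "(\<lambda>u. ennreal (p (dd N w) (u - ?eN w)) * indicator C (w(Suc N := u))) \<in> borel_measurable lborel"
        by (rule borel_measurable_times_ennreal[OF m2 measurable_compose[OF m1 borel_measurable_indicator[OF C]]])
      have "?G C w = (\<integral>\<^sup>+ y. ennreal (p (dd N w) ((?eN w + y) - ?eN w)) * indicator C (w(Suc N := ?eN w + y)) \<partial>lborel)"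
        by (simp add: wp)
      also have "\<dots> = (\<integral>\<^sup>+ u. ennreal (p (dd N w) (u - ?eN w)) * indicator C (w(Suc N := u)) \<partial>lborel)"
        using nn_integral_real_affine[of "\<lambda>u. ennreal (p (dd N w) (u - ?eN w)) * indicator C (w(Suc N := u))" 1 "?eN w"]
          m1 m2 by (simp add: measurable_compose[OF m1 borel_measurable_indicator[OF C]])
      finally have "gd N w * ?G C w = (\<integral>\<^sup>+ u. gd N w * (ennreal (p (dd N w) (u - ?eN w)) * indicator C (w(Suc N := u))) \<partial>lborel)"
        by (simp add: nn_integral_cmult[OF m3])
      also have "\<dots> = (\<integral>\<^sup>+u. gd (Suc N) (w(Suc N := u)) * indicator C (w(Suc N := u)) \<partial>lborel)"
        by (simp add: gd_step mult.assoc[symmetric])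
      finally show "gd N w * ?G C w = (\<integral>\<^sup>+u. gd (Suc N) (w(Suc N := u)) * indicator C (w(Suc N := u)) \<partial>lborel)" .
    qed
    also have "\<dots> = (\<integral>\<^sup>+x. gd (Suc N) x * indicator C x \<partial>?PS)"
    proof -
      have ins: "{1..Suc N} = insert (Suc N) {1..N}" by auto
      have mm: "(\<lambda>x. gd (Suc N) x * indicator C x) \<in> borel_measurable ?PS"
        by (rule borel_measurable_times_ennreal[OF gd_meas borel_measurable_indicator[OF C]])
      have ps: "product_sigma_finite (\<lambda>_. lborel::real measure)"
        by (simp add: product_sigma_finite_def sigma_finite_lborel)
      show ?thesis
        using product_sigma_finite.product_nn_integral_insert[OF ps, of "{1..N}" "Suc N" "\<lambda>x. gd (Suc N) x * indicator C x"] mm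
        unfolding ins by simp
    qed
    also have "\<dots> = emeasure (density ?PS (gd (Suc N))) C"
      using C by (subst emeasure_density) auto
    finally show "emeasure (distr M ?PS (W (Suc N))) C = emeasure (density ?PS (gd (Suc N))) C" .
  qed simp
qed

end

theorem proposition2p1:
  fixes V1 V2 :: "real \<Rightarrow> real" and lam :: real and v :: "real \<Rightarrow> real"
    and M :: "'s measure" and Y :: "nat \<Rightarrow> 's \<Rightarrow> real" and a b :: real and n :: nat
  assumes C1: "cond_C1 V1"
    and C2: "cond_C2 V2"
    and lam: "lam = L2_spectral_radius (kern V1 V2)" "lam > 0"
    and v_L2: "v \<in> borel_measurable lborel" "integrable lborel (\<lambda>x. (v x)\<^sup>2)"
    and v_pos: "\<forall>x. v x > 0"
    and v_eig: "\<forall>x. v x = (1 / lam) * (LINT y|lborel. kern V1 V2 x y * v y)"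
    and MC: "markov_chain_dens M Y a (trans_dens (kern V1 V2) lam v)"
  shows "distr M (PiM {1..n} (\<lambda>_. lborel)) (\<lambda>\<omega>. \<lambda>i\<in>{1..n}. b + (\<Sum>j=1..i. Y j \<omega>))
       = density (PiM {1..n} (\<lambda>_. lborel))
           (\<lambda>w. ennreal (v (ext_conf a b w (int n) - ext_conf a b w (int n - 1)) / (lam ^ n * v a)
                   * exp (- hamil V1 V2 n (ext_conf a b w))))"
proof -
  have "mcs V1 V2 lam v M Y a"
  proof
    show "V1 \<in> borel_measurable borel" using C1 by (simp add: cond_C1_def)
    show "V2 \<in> borel_measurable borel" using C2 by (simp add: cond_C2_def)
    show "v \<in> borel_measurable borel" using v_L2(1) by simp
    show "lam > 0" by (rule lam(2))
    show "\<And>x. v x > 0" using v_pos by simp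
    show "markov_chain_dens M Y a (trans_dens (kern V1 V2) lam v)" by (rule MC)
  qed
  from mcs.main[OF this, of n] show ?thesis
    unfolding mcs.W_def[OF \<open>mcs V1 V2 lam v M Y a\<close>] mcs.gd_def[OF \<open>mcs V1 V2 lam v M Y a\<close>]
    by (simp add: fun_eq_iff)
qed

end
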